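(* Let $\lambda,\varepsilon,\sigma\in\mathbb{R}$, $(x_0,y_0)\in\mathbb{R}^2\setminus\{(0,0)\}$, and for $0<\Delta t<1$ let $t_n=n\Delta t$, $\Delta B_{1,n}=B_1(t_{n+1})-B_1(t_n)$ for a standard scalar Brownian motion $B_1$, and define $\rho_0=\sqrt{x_0^2+y_0^2}$, $$\rho_n=\rho_{n-1}\Big[1+\Big(\lambda+\tfrac{\varepsilon^2}{2}-\tfrac{\sigma^2}{2}\Big)\Delta t+\sigma\Delta B_{1,n-1}+\tfrac{\sigma^2}{2}\Delta B_{1,n-1}^2\Big],\quad n\ge1.$$ Then there exist $\Delta t_\ddagger>0$ and constants $0<C_-<C_+$ such that for all $0<\Delta t<\Delta t_\ddagger$, almost surely, $$\limsup_{n\to\infty}\frac1{t_n}\log|\rho_n|\ge\frac1{\Delta t}\log\Big(1+\Big(\lambda+\tfrac{\varepsilon^2}{2}-\tfrac{\sigma^2}{2}\Big)\Delta t\Big)-C_-\Delta t^{1/2},$$ $$\limsup_{n\to\infty}\frac1{t_n}\log|\rho_n|\le\frac1{\Delta t}\log\Big(1+\Big(\lambda+\tfrac{\varepsilon^2}{2}-\tfrac{\sigma^2}{2}\Big)\Delta t\Big)+C_+\Delta t^{1/2}.$$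
   Context: $\rho_n$ is the Milstein approximation (written $|Z_n|$ in the paper) of the norm of the solution of $dZ=\lambda Z\,dt+\sigma Z\,dB_1+\varepsilon\begin{pmatrix}0&-1\\1&0\end{pmatrix}Z\,dB_2$, $Z(0)=(x_0,y_0)$. *)

theory Defs
  imports "HOL-Probability.Probability"
begin

definition standard_brownian_motion :: "'a measure \<Rightarrow> (real \<Rightarrow> 'a \<Rightarrow> real) \<Rightarrow> bool" where
  "standard_brownian_motion M B \<longleftrightarrow>
     prob_space M \<and>
     (\<forall>t. B t \<in> borel_measurable M) \<and>
     (AE \<omega> in M. B 0 \<omega> = 0) \<and>
     (\<forall>s t. 0 \<le> s \<longrightarrow> s < t \<longrightarrow>
        distributed M lborel (\<lambda>\<omega>. B t \<omega> - B s \<omega>) (normal_density 0 (sqrt (t - s)))) \<and>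
     (\<forall>(ts :: nat \<Rightarrow> real) n. 0 \<le> ts 0 \<longrightarrow> strict_mono ts \<longrightarrow>
        prob_space.indep_vars M (\<lambda>_. borel) (\<lambda>i \<omega>. B (ts (Suc i)) \<omega> - B (ts i) \<omega>) {..<n}) \<and>
     (AE \<omega> in M. continuous_on {0..} (\<lambda>t. B t \<omega>))"

definition bm_incr :: "(real \<Rightarrow> 'a \<Rightarrow> real) \<Rightarrow> real \<Rightarrow> nat \<Rightarrow> 'a \<Rightarrow> real" where
  "bm_incr B dt n \<omega> = B (real (Suc n) * dt) \<omega> - B (real n * dt) \<omega>"

fun milstein_rho :: "real \<Rightarrow> real \<Rightarrow> real \<Rightarrow> real \<Rightarrow> real \<Rightarrow> (real \<Rightarrow> 'a \<Rightarrow> real) \<Rightarrow> real \<Rightarrow> nat \<Rightarrow> 'a \<Rightarrow> real" where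
  "milstein_rho lam eps sig x0 y0 B dt 0 \<omega> = sqrt (x0\<^sup>2 + y0\<^sup>2)"
| "milstein_rho lam eps sig x0 y0 B dt (Suc n) \<omega> =
     milstein_rho lam eps sig x0 y0 B dt n \<omega> *
       (1 + (lam + eps\<^sup>2 / 2 - sig\<^sup>2 / 2) * dt + sig * bm_incr B dt n \<omega>
          + sig\<^sup>2 / 2 * (bm_incr B dt n \<omega>)\<^sup>2)"

end

theory Submission
  imports Defs
begin

definition NN :: "real \<Rightarrow> real measure" where
  "NN s = density lborel (\<lambda>x. ennreal (normal_density 0 s x))"

lemma NN_prob: "0 < s \<Longrightarrow> prob_space (NN s)"
  unfolding NN_def by (rule prob_space_normal_density)

lemma NN_space[simp]: "space (NN s) = UNIV"
  by (simp add: NN_def)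

lemma NN_integrable_iff:
  assumes [measurable]: "h \<in> borel_measurable borel"
  shows "integrable (NN s) h \<longleftrightarrow> integrable lborel (\<lambda>x. normal_density 0 s x * h x)"
  unfolding NN_def by (rule integrable_real_density) auto

lemma NN_integral:
  assumes [measurable]: "h \<in> borel_measurable borel"
  shows "integral\<^sup>L (NN s) h = (\<integral>x. normal_density 0 s x * h x \<partial>lborel)"
  unfolding NN_def by (rule integral_real_density) auto

lemma NN_int_pow: "0 < s \<Longrightarrow> integrable (NN s) (\<lambda>x. x ^ k)"
  using integrable_normal_moment[where \<mu>=0 and \<sigma>=s and k=k] by (subst NN_integrable_iff) auto

lemma NN_int_abspow: "0 < s \<Longrightarrow> integrable (NN s) (\<lambda>x. \<bar>x\<bar> ^ k)"
  using integrable_normal_moment_abs[where \<mu>=0 and \<sigma>=s and k=k] by (subst NN_integrable_iff) auto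

lemma NN_mom1: "0 < s \<Longrightarrow> integral\<^sup>L (NN s) (\<lambda>x. x) = 0"
  using integral_normal_moment_odd[where \<mu>=0 and \<sigma>=s and k=0] by (subst NN_integral) auto

lemma NN_mom2: "0 < s \<Longrightarrow> integral\<^sup>L (NN s) (\<lambda>x. x^2) = s^2"
  using integral_normal_moment_even[where \<mu>=0 and \<sigma>=s and k=1] by (subst NN_integral) auto

lemma NN_mom3: "0 < s \<Longrightarrow> integral\<^sup>L (NN s) (\<lambda>x. x^3) = 0"
  using integral_normal_moment_odd[where \<mu>=0 and \<sigma>=s and k=1] by (subst NN_integral) (auto simp: numeral_3_eq_3)

lemma NN_mom4: "0 < s \<Longrightarrow> integral\<^sup>L (NN s) (\<lambda>x. x^4) = 3 * s^4"
  using integral_normal_moment_even[where \<mu>=0 and \<sigma>=s and k=2] by (subst NN_integral) (auto simp: fact_numeral power_divide)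

lemma NN_mom6: "0 < s \<Longrightarrow> integral\<^sup>L (NN s) (\<lambda>x. x^6) = 15 * s^6"
  using integral_normal_moment_even[where \<mu>=0 and \<sigma>=s and k=3] by (subst NN_integral) (auto simp: fact_numeral power_divide)

lemma NN_absmom3: "0 < s \<Longrightarrow> integral\<^sup>L (NN s) (\<lambda>x. \<bar>x\<bar>^3) = 2 * s^3 * sqrt (2/pi)"
  using integral_normal_moment_abs_odd[where \<mu>=0 and \<sigma>=s and k=1] by (subst NN_integral) (auto simp: numeral_3_eq_3)

lemma phi_deriv: "-1 < x \<Longrightarrow> ((\<lambda>x. ln (1+x) - x + x^2/2) has_real_derivative (x^2/(1+x))) (at x)"
  apply (rule derivative_eq_intros refl | simp)+
  apply (simp add: field_simps power2_eq_square)
  done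

lemma ln_taylor3:
  fixes u :: real assumes u: "-2/3 \<le> u"
  shows "\<bar>ln (1+u) - u + u^2/2\<bar> \<le> \<bar>u\<bar>^3"
proof (cases "0 \<le> u")
  case True
  have a: "0 \<le> ln (1+u) - u + u^2/2"
    using DERIV_nonneg_imp_nondecreasing[of 0 u "\<lambda>x. ln (1+x) - x + x^2/2"] True
    using phi_deriv by force
  have "(\<lambda>x. x^3/3 - (ln (1+x) - x + x^2/2)) 0 \<le> (\<lambda>x. x^3/3 - (ln (1+x) - x + x^2/2)) u"
  proof (rule DERIV_nonneg_imp_nondecreasing[OF True])
    fix x assume x0: "0 \<le> x" "x \<le> u" hence x: "0 \<le> x \<and> x \<le> u" by simp
    have "((\<lambda>x. x^3/3 - (ln (1+x) - x + x^2/2)) has_real_derivative (x^2 - x^2/(1+x))) (at x)"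
    proof -
      have "((\<lambda>x. x^3/3) has_real_derivative x^2) (at x)"
        by (rule derivative_eq_intros refl | simp)+
      from DERIV_diff[OF this phi_deriv] x show ?thesis by simp
    qed
    moreover have "x^2/(1+x) \<le> x^2" using x by (simp add: field_simps)
    ultimately show "\<exists>y. ((\<lambda>x. x^3/3 - (ln (1+x) - x + x^2/2)) has_real_derivative y) (at x) \<and> 0 \<le> y"
      by force
  qed
  then have "ln (1+u) - u + u^2/2 \<le> u^3/3" by simp
  with a True show ?thesis by auto
next
  case False
  have a: "ln (1+u) - u + u^2/2 \<le> 0"
    using DERIV_nonneg_imp_nondecreasing[of u 0 "\<lambda>x. ln (1+x) - x + x^2/2"] False u
    using phi_deriv by force
  have "(\<lambda>x. x^3 - (ln (1+x) - x + x^2/2)) u \<le> (\<lambda>x. x^3 - (ln (1+x) - x + x^2/2)) 0"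
  proof (rule DERIV_nonneg_imp_nondecreasing[where f="\<lambda>x. x^3 - (ln (1+x) - x + x^2/2)"])
    show "u \<le> 0" using False by simp
    fix x assume x0: "u \<le> x" "x \<le> 0" hence x: "u \<le> x \<and> x \<le> 0" by simp
    have "((\<lambda>x. x^3 - (ln (1+x) - x + x^2/2)) has_real_derivative (3*x^2 - x^2/(1+x))) (at x)"
    proof -
      have "((\<lambda>x. x^3) has_real_derivative 3*x^2) (at x)"
        by (rule derivative_eq_intros refl | simp)+
      from DERIV_diff[OF this phi_deriv] x u show ?thesis by simp
    qed
    moreover have "x^2/(1+x) \<le> 3*x^2"
    proof -
      have p: "0 < 1+x" using x u by simp
      have "x^2 * 1 \<le> x^2 * (3*(1+x))" using x u by (intro mult_left_mono) auto
      then show ?thesis using p by (simp add: divide_le_eq algebra_simps)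
    qed
    ultimately show "\<exists>y. ((\<lambda>x. x^3 - (ln (1+x) - x + x^2/2)) has_real_derivative y) (at x) \<and> 0 \<le> y"
      by force
  qed
  then have "u ^ 3 \<le> ln (1+u) - u + u^2/2" by simp
  moreover have "(abs u) ^ 3 = - (u ^ 3)" using False by (simp add: power3_eq_cube)
  ultimately show ?thesis using a by auto
qed

lemma sq_le2: "((a::real)+b)^2 \<le> 2*(a^2+b^2)"
proof -
  have "0 \<le> (a-b)^2" by simp
  thus ?thesis by (simp add: power2_eq_square algebra_simps)
qed

lemma cube_le4: assumes "0 \<le> (a::real)" "0 \<le> b" shows "(a+b)^3 \<le> 4*(a^3+b^3)"
proof -
  have "0 \<le> 3*(a+b)*(a-b)^2" using assms by simp
  thus ?thesis by (simp add: power2_eq_square power3_eq_cube algebra_simps)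
qed

lemma g_pointwise:
  fixes q sig x :: real
  assumes q: "3/4 \<le> q" "q \<le> 5/4"
  shows "\<bar>ln (q + sig*x + sig^2/2*x^2) - ln q
          - (sig/q*x + (sig^2/(2*q) - sig^2/(2*q^2))*x^2 - sig^3/(2*q^2)*x^3 - sig^4/(8*q^2)*x^4)\<bar>
         \<le> 10*(\<bar>sig\<bar>^3*\<bar>x\<bar>^3 + sig^6*x^6/8)"
proof -
  define v where "v = sig*x + sig^2/2*x^2"
  define u where "u = v/q"
  have qpos: "0 < q" using q by simp
  have v1: "v + 1/2 = (sig*x+1)^2/2" unfolding v_def by (simp add: power2_eq_square algebra_simps)
  have "0 \<le> (sig*x+1)^2/2" by simp
  hence vge: "-1/2 \<le> v" using v1 by linarith
  have uge: "-2/3 \<le> u" unfolding u_def using vge q by (simp add: field_simps) 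
  have qv: "q + sig*x + sig^2/2*x^2 = q*(1+u)" unfolding u_def v_def using qpos by (simp add: field_simps)
  have u1: "0 < 1+u" using uge by simp
  have lnq: "ln (q + sig*x + sig^2/2*x^2) = ln q + ln (1+u)" unfolding qv using qpos u1 by (simp add: ln_mult)
  have P: "sig/q*x + (sig^2/(2*q) - sig^2/(2*q^2))*x^2 - sig^3/(2*q^2)*x^3 - sig^4/(8*q^2)*x^4 = u - u^2/2"
    unfolding u_def v_def using qpos by (simp add: field_simps power2_eq_square power3_eq_cube power4_eq_xxxx)
  have "\<bar>ln (1+u) - u + u^2/2\<bar> \<le> \<bar>u\<bar>^3" by (rule ln_taylor3[OF uge])
  also have "\<bar>u\<bar>^3 = \<bar>v\<bar>^3 / q^3" unfolding u_def using qpos by (simp add: power_divide abs_divide)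
  also have "\<dots> \<le> \<bar>v\<bar>^3 * (64/27)"
  proof -
    have "(3/4)^3 \<le> q^3" using power_mono[OF q(1), of 3] by simp
    hence "27/64 \<le> q^3" by (simp add: power_divide)
    hence "1/q^3 \<le> 64/27" using qpos by (simp add: field_simps)
    hence "\<bar>v\<bar>^3 * (1/q^3) \<le> \<bar>v\<bar>^3 * (64/27)" by (intro mult_left_mono) auto
    thus ?thesis by simp
  qed
  also have "\<bar>v\<bar>^3 \<le> (\<bar>sig\<bar>*\<bar>x\<bar> + sig^2/2*x^2)^3"
  proof (rule power_mono)
    have "\<bar>v\<bar> \<le> \<bar>sig*x\<bar> + \<bar>sig^2/2*x^2\<bar>" unfolding v_def by (rule abs_triangle_ineq)
    moreover have "\<bar>sig*x\<bar> = \<bar>sig\<bar>*\<bar>x\<bar>" by (rule abs_mult)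
    moreover have "\<bar>sig^2/2*x^2\<bar> = sig^2/2*x^2" by simp
    ultimately show "\<bar>v\<bar> \<le> \<bar>sig\<bar>*\<bar>x\<bar> + sig^2/2*x^2" by simp
  qed simp
  hence "\<bar>v\<bar>^3 * (64/27) \<le> (\<bar>sig\<bar>*\<bar>x\<bar> + sig^2/2*x^2)^3 * (64/27)" by simp
  also have "(\<bar>sig\<bar>*\<bar>x\<bar> + sig^2/2*x^2)^3 \<le> 4*((\<bar>sig\<bar>*\<bar>x\<bar>)^3 + (sig^2/2*x^2)^3)"
    by (rule cube_le4) auto
  hence "(\<bar>sig\<bar>*\<bar>x\<bar> + sig^2/2*x^2)^3 * (64/27) \<le> 4*((\<bar>sig\<bar>*\<bar>x\<bar>)^3 + (sig^2/2*x^2)^3) * (64/27)" by simp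
  also have "4*((\<bar>sig\<bar>*\<bar>x\<bar>)^3 + (sig^2/2*x^2)^3) * (64/27) \<le> 10*(\<bar>sig\<bar>^3*\<bar>x\<bar>^3 + sig^6*x^6/8)"
  proof -
    have e: "(\<bar>sig\<bar>*\<bar>x\<bar>)^3 + (sig^2/2*x^2)^3 = \<bar>sig\<bar>^3*\<bar>x\<bar>^3 + sig^6*x^6/8"
      by (simp add: power_mult_distrib power_divide flip: power_mult)
    have "0 \<le> sig^6*x^6" by (simp add: zero_le_even_power')
    moreover have "0 \<le> \<bar>sig\<bar>^3*\<bar>x\<bar>^3" by simp
    moreover have h: "\<And>A B::real. 0 \<le> A \<Longrightarrow> 0 \<le> B \<Longrightarrow> 4*(A + B/8)*(64/27) \<le> 10*(A+B/8)"
      by (simp add: algebra_simps)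
    ultimately show ?thesis unfolding e by (intro h) auto
  qed
  finally have "\<bar>ln (1+u) - u + u^2/2\<bar> \<le> 10*(\<bar>sig\<bar>^3*\<bar>x\<bar>^3 + sig^6*x^6/8)" by simp
  thus ?thesis unfolding lnq P by (simp add: algebra_simps)
qed

lemma NN_hbi_pow: "0 < s \<Longrightarrow> has_bochner_integral (NN s) (\<lambda>x. x^k) (integral\<^sup>L (NN s) (\<lambda>x. x^k))"
  using NN_int_pow by (simp add: has_bochner_integral_iff)

lemma NN_hbi_abspow: "0 < s \<Longrightarrow> has_bochner_integral (NN s) (\<lambda>x. \<bar>x\<bar>^k) (integral\<^sup>L (NN s) (\<lambda>x. \<bar>x\<bar>^k))"
  using NN_int_abspow by (simp add: has_bochner_integral_iff)

lemma mu_bound: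
  fixes sig a dt :: real
  assumes dt: "0 < dt" "dt < 1" and ad: "\<bar>a\<bar> * dt \<le> 1/4"
  shows "integrable (NN (sqrt dt)) (\<lambda>x. ln (1 + a*dt + sig*x + sig^2/2*x^2))"
    and "\<bar>integral\<^sup>L (NN (sqrt dt)) (\<lambda>x. ln (1 + a*dt + sig*x + sig^2/2*x^2)) - ln (1 + a*dt)\<bar>
          \<le> (sig^2*\<bar>a\<bar> + sig^4 + 20*\<bar>sig\<bar>^3 + 20* sig^6) * (dt * sqrt dt)"
proof -
  define s where "s = sqrt dt"
  define q where "q = 1 + a*dt"
  have s: "0 < s" using dt by (simp add: s_def)
  have s2: "s^2 = dt" using dt by (simp add: s_def)
  have dtle: "dt \<le> sqrt dt"
  proof -
    have "sqrt dt \<le> 1" using dt by simp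
    hence "sqrt dt * sqrt dt \<le> sqrt dt * 1" using dt by (intro mult_left_mono) auto
    thus ?thesis using dt by simp
  qed
  have s3: "s^3 = dt * sqrt dt" using dt by (simp add: s_def power3_eq_cube)
  have s4: "s^4 = dt^2"
  proof -
    have "s^4 = (s^2)^2" by (simp flip: power_mult)
    thus ?thesis using s2 by simp
  qed
  have s6: "s^6 = dt^3"
  proof -
    have "s^6 = (s^2)^3" by (simp flip: power_mult)
    thus ?thesis using s2 by simp
  qed
  have adt: "\<bar>a*dt\<bar> \<le> 1/4" using ad dt by (simp add: abs_mult)
  have q: "3/4 \<le> q" "q \<le> 5/4" using adt unfolding q_def abs_le_iff by linarith+
  have qpos: "0 < q" using q by simp
  interpret N: prob_space "NN s" using NN_prob[OF s] .
  define c1 where "c1 = sig/q"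
  define c2 where "c2 = sig^2/(2*q) - sig^2/(2*q^2)"
  define c3 where "c3 = sig^3/(2*q^2)"
  define c4 where "c4 = sig^4/(8*q^2)"
  define P where "P = (\<lambda>x::real. c1*x + c2*x^2 - c3*x^3 - c4*x^4)"
  define R where "R = (\<lambda>x::real. 10*(\<bar>sig\<bar>^3*\<bar>x\<bar>^3 + sig^6*x^6/8))"
  define g where "g = (\<lambda>x. ln (q + sig*x + sig^2/2*x^2))"
  have hx: "has_bochner_integral (NN s) (\<lambda>x. x) 0"
    using NN_hbi_pow[OF s, of 1] NN_mom1[OF s] by simp
  have h2: "has_bochner_integral (NN s) (\<lambda>x. x^2) (s^2)"
    using NN_hbi_pow[OF s, of 2] NN_mom2[OF s] by simp
  have h3: "has_bochner_integral (NN s) (\<lambda>x. x^3) 0"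
    using NN_hbi_pow[OF s, of 3] NN_mom3[OF s] by simp
  have h4: "has_bochner_integral (NN s) (\<lambda>x. x^4) (3 * s^4)"
    using NN_hbi_pow[OF s, of 4] NN_mom4[OF s] by simp
  have h6: "has_bochner_integral (NN s) (\<lambda>x. x^6) (15 * s^6)"
    using NN_hbi_pow[OF s, of 6] NN_mom6[OF s] by simp
  have ha3: "has_bochner_integral (NN s) (\<lambda>x. \<bar>x\<bar>^3) (2 * s^3 * sqrt (2/pi))"
    using NN_hbi_abspow[OF s, of 3] NN_absmom3[OF s] by simp
  have hP0: "has_bochner_integral (NN s) (\<lambda>x. c1*x + c2*x^2 - c3*x^3 - c4*x^4) (c1*0 + c2* s^2 - c3*0 - c4*(3* s^4))"
    by (intro has_bochner_integral_diff has_bochner_integral_add has_bochner_integral_mult_right hx h2 h3 h4)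
  have hP: "has_bochner_integral (NN s) P (c2* s^2 - c4*(3* s^4))"
    using hP0 unfolding P_def by simp
  have hR0: "has_bochner_integral (NN s) (\<lambda>x. 10*(\<bar>sig\<bar>^3*\<bar>x\<bar>^3 + sig^6*x^6/8)) (10*(\<bar>sig\<bar>^3*(2* s^3* sqrt(2/pi)) + sig^6*(15* s^6)/8))"
    by (intro has_bochner_integral_add has_bochner_integral_mult_right has_bochner_integral_divide_zero ha3 h6)
  have hR: "has_bochner_integral (NN s) R (10*(\<bar>sig\<bar>^3*(2* s^3* sqrt(2/pi)) + sig^6*(15* s^6)/8))"
    using hR0 unfolding R_def .
  have iR: "integrable (NN s) R" using hR by (simp add: has_bochner_integral_iff)
  have iP: "integrable (NN s) P" using hP by (simp add: has_bochner_integral_iff)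
  have pw: "\<bar>g x - ln q - P x\<bar> \<le> R x" for x
    unfolding g_def P_def R_def c1_def c2_def c3_def c4_def using g_pointwise[OF q, of sig x] by (simp only:)
  have [measurable]: "g \<in> borel_measurable borel" unfolding g_def by measurable
  have [measurable]: "P \<in> borel_measurable borel" unfolding P_def by measurable
  have iD: "integrable (NN s) (\<lambda>x. g x - ln q - P x)"
  proof (rule Bochner_Integration.integrable_bound)
    show "integrable (NN s) R" using hR by (simp add: has_bochner_integral_iff)
    show "(\<lambda>x. g x - ln q - P x) \<in> borel_measurable (NN s)" by (simp add: NN_def)
    show "AE x in NN s. norm (g x - ln q - P x) \<le> norm (R x)" using pw by (auto intro!: AE_I2 simp: R_def)
  qed
  have bD: "\<bar>integral\<^sup>L (NN s) (\<lambda>x. g x - ln q - P x)\<bar> \<le> integral\<^sup>L (NN s) R"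
    using Bochner_Integration.integral_norm_bound_integral[OF iD iR] pw by simp
  have pU: "measure (NN s) UNIV = 1" using N.prob_space by simp
  define D where "D = (\<lambda>x. g x - ln q - P x)"
  have iD': "integrable (NN s) D" using iD unfolding D_def .
  have gdec: "g = (\<lambda>x. D x + ln q + P x)" by (auto simp: D_def)
  have ig: "integrable (NN s) g"
    unfolding gdec by (intro Bochner_Integration.integrable_add iD' N.integrable_const iP)
  have e1: "integral\<^sup>L (NN s) (\<lambda>x. D x + ln q + P x) = integral\<^sup>L (NN s) (\<lambda>x. D x + ln q) + integral\<^sup>L (NN s) P"
    by (rule Bochner_Integration.integral_add) (intro Bochner_Integration.integrable_add iD' N.integrable_const, rule iP)
  have e2: "integral\<^sup>L (NN s) (\<lambda>x. D x + ln q) = integral\<^sup>L (NN s) D + ln q"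
    by (subst Bochner_Integration.integral_add) (auto simp: iD' pU)
  have e3: "integral\<^sup>L (NN s) P = c2* s^2 - c4*(3* s^4)"
    using hP has_bochner_integral_integral_eq by blast
  have Ig: "integral\<^sup>L (NN s) g = integral\<^sup>L (NN s) (\<lambda>x. g x - ln q - P x) + ln q + (c2* s^2 - c4*(3* s^4))"
    unfolding gdec e1 e2 e3 by (simp add: D_def)
  show "integrable (NN (sqrt dt)) (\<lambda>x. ln (1 + a*dt + sig*x + sig^2/2*x^2))"
    using ig unfolding g_def q_def s_def .
  have IR: "integral\<^sup>L (NN s) R \<le> (20*\<bar>sig\<bar>^3 + 20* sig^6) * (dt * sqrt dt)"
  proof -
    have "integral\<^sup>L (NN s) R = 10*(\<bar>sig\<bar>^3*(2* s^3* sqrt(2/pi)) + sig^6*(15* s^6)/8)"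
      using hR has_bochner_integral_integral_eq by blast
    also have "\<dots> \<le> 10*(\<bar>sig\<bar>^3*(2* s^3) + sig^6*(15* s^6)/8)"
    proof -
      have "sqrt(2/pi) \<le> 1" using pi_gt3 by simp
      hence "\<bar>sig\<bar>^3*(2* s^3* sqrt(2/pi)) \<le> \<bar>sig\<bar>^3*(2* s^3)" using s
        by (intro mult_left_mono) auto
      moreover have "\<And>A B C::real. A \<le> B \<Longrightarrow> 10*(A + C) \<le> 10*(B+C)" by simp
      ultimately show ?thesis by blast
    qed
    also have "\<dots> \<le> (20*\<bar>sig\<bar>^3 + 20* sig^6) * (dt * sqrt dt)"
    proof -
      have "dt * dt \<le> dt * 1" using dt by (intro mult_left_mono) auto
      hence "dt * dt \<le> sqrt dt" using dtle by simp
      hence "dt * (dt * dt) \<le> dt * sqrt dt" using dt by (intro mult_left_mono) auto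
      hence "dt^3 \<le> dt * sqrt dt" by (simp add: power3_eq_cube)
      hence m: "sig^6 * dt^3 \<le> sig^6 * (dt * sqrt dt)" by (intro mult_left_mono) (auto simp: zero_le_even_power')
      have "0 \<le> sig^6 * dt^3" using dt by (simp add: zero_le_even_power')
      hence B: "150*(sig^6 * dt^3)/8 \<le> 20*(sig^6 * (dt * sqrt dt))" using m by linarith
      have "10*(\<bar>sig\<bar>^3*(2* s^3) + sig^6*(15* s^6)/8) = 20*(\<bar>sig\<bar>^3*(dt * sqrt dt)) + 150*(sig^6 * dt^3)/8"
        unfolding s3 s6 by (simp add: algebra_simps)
      also have "(20*\<bar>sig\<bar>^3 + 20* sig^6) * (dt * sqrt dt) = 20*(\<bar>sig\<bar>^3*(dt * sqrt dt)) + 20*(sig^6 * (dt * sqrt dt))"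
        by (simp add: algebra_simps)
      ultimately show ?thesis using B by linarith
    qed
    finally show ?thesis .
  qed
  have IP: "\<bar>c2* s^2 - c4*(3* s^4)\<bar> \<le> (sig^2*\<bar>a\<bar> + sig^4) * (dt * sqrt dt)"
  proof -
    have iq: "1/q^2 \<le> 16/9"
    proof -
      have "(3/4)^2 \<le> q^2" using power_mono[OF q(1), of 2] by simp
      thus ?thesis using qpos by (simp add: field_simps power_divide)
    qed
    have c2': "c2 = sig^2 * (q - 1) * (1/q^2) / 2" unfolding c2_def using qpos
      by (simp add: field_simps power2_eq_square)
    have c2: "c2 = sig^2 * a * dt * (1/q^2) / 2" unfolding c2' q_def by simp
    have "\<bar>c2* s^2\<bar> = sig^2 * \<bar>a\<bar> * dt^2 * (1/q^2) / 2" unfolding c2 s2 using qpos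
      by (simp add: abs_mult power2_eq_square)
    also have "\<dots> \<le> sig^2 * \<bar>a\<bar> * dt^2 * (16/9) / 2" using iq
      by (intro divide_right_mono mult_left_mono) auto
    also have "\<dots> \<le> sig^2 * \<bar>a\<bar> * dt^2"
    proof -
      have "0 \<le> sig^2 * \<bar>a\<bar> * dt^2" by simp
      moreover have "\<And>X::real. 0 \<le> X \<Longrightarrow> X*(16/9)/2 \<le> X" by simp
      ultimately show ?thesis by blast
    qed
    finally have A: "\<bar>c2* s^2\<bar> \<le> sig^2 * \<bar>a\<bar> * dt^2" .
    have "\<bar>c4*(3* s^4)\<bar> = sig^4 * dt^2 * (1/q^2) * (3/8)" unfolding c4_def s4 using qpos
      by (simp add: abs_mult)
    also have "\<dots> \<le> sig^4 * dt^2 * (16/9) * (3/8)" using iq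
      by (intro mult_right_mono mult_left_mono) (auto simp: zero_le_even_power')
    also have "\<dots> \<le> sig^4 * dt^2"
    proof -
      have "0 \<le> sig^4 * dt^2" by (simp add: zero_le_even_power')
      moreover have "\<And>X::real. 0 \<le> X \<Longrightarrow> X*(16/9)*(3/8) \<le> X" by simp
      ultimately show ?thesis by blast
    qed
    finally have B: "\<bar>c4*(3* s^4)\<bar> \<le> sig^4 * dt^2" .
    have "dt^2 \<le> dt * sqrt dt" using dtle dt by (simp add: power2_eq_square)
    hence "(sig^2*\<bar>a\<bar> + sig^4) * dt^2 \<le> (sig^2*\<bar>a\<bar> + sig^4) * (dt * sqrt dt)"
      by (intro mult_left_mono) (auto simp: zero_le_even_power')
    moreover have "\<bar>c2* s^2 - c4*(3* s^4)\<bar> \<le> \<bar>c2* s^2\<bar> + \<bar>c4*(3* s^4)\<bar>" by (rule abs_triangle_ineq4)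
    moreover have "(sig^2*\<bar>a\<bar> + sig^4) * dt^2 = sig^2 * \<bar>a\<bar> * dt^2 + sig^4 * dt^2" by (simp add: algebra_simps)
    ultimately show ?thesis using A B by linarith
  qed
  have "\<bar>integral\<^sup>L (NN s) g - ln q\<bar> \<le> integral\<^sup>L (NN s) R + \<bar>c2* s^2 - c4*(3* s^4)\<bar>"
    unfolding Ig using bD by linarith
  also have "\<dots> \<le> (sig^2*\<bar>a\<bar> + sig^4 + 20*\<bar>sig\<bar>^3 + 20* sig^6) * (dt * sqrt dt)"
    using IR IP by (simp add: algebra_simps)
  finally show "\<bar>integral\<^sup>L (NN (sqrt dt)) (\<lambda>x. ln (1 + a*dt + sig*x + sig^2/2*x^2)) - ln (1 + a*dt)\<bar>
          \<le> (sig^2*\<bar>a\<bar> + sig^4 + 20*\<bar>sig\<bar>^3 + 20* sig^6) * (dt * sqrt dt)"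
    unfolding g_def q_def s_def .
qed

lemma pow4_le: "(1 + (y::real))^4 \<le> 8*(1 + y^4)"
proof -
  have a: "(1+y)^2 \<le> 2*(1+y^2)" using sq_le2[of 1 y] by simp
  have "(1+y)^4 = ((1+y)^2)^2" by (simp flip: power_mult)
  also have "\<dots> \<le> (2*(1+y^2))^2" using a by (intro power_mono) auto
  also have "\<dots> = 4*(1+y^2)^2" unfolding power_mult_distrib by simp
  also have "(1+y^2)^2 \<le> 2*(1+(y^2)^2)" using sq_le2[of 1 "y^2"] by simp
  hence "4*(1+y^2)^2 \<le> 8*(1+(y^2)^2)" by simp
  also have "(y^2)^2 = y^4" by (simp flip: power_mult)
  finally show ?thesis by simp
qed

lemma g_growth:
  fixes q sig x m :: real
  assumes q: "3/4 \<le> q" "q \<le> 5/4"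
  shows "\<bar>ln (q + sig*x + sig^2/2*x^2) - m\<bar> \<le> (5 + \<bar>m\<bar> + \<bar>sig\<bar> + sig^2) * (1 + x^2)"
proof -
  define w where "w = q + sig*x + sig^2/2*x^2"
  have "0 \<le> (sig*x+1)^2/2" by simp
  moreover have "w = q - 1/2 + (sig*x+1)^2/2" unfolding w_def by (simp add: power2_eq_square algebra_simps)
  ultimately have w: "1/4 \<le> w" using q by linarith
  have up: "ln w \<le> w" using w ln_le_minus_one[of w] by simp
  have "ln (1/w) \<le> 1/w - 1" using w by (intro ln_le_minus_one) simp
  moreover have "1/w \<le> 4" using w by (simp add: field_simps)
  ultimately have lo: "-3 \<le> ln w" using w by (simp add: ln_div)
  have ax: "\<bar>x\<bar> \<le> 1 + x^2"
  proof (cases "\<bar>x\<bar> \<le> 1")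
    case True have "0 \<le> x^2" by simp
    thus ?thesis using True by linarith
  next
    case False hence "\<bar>x\<bar> * 1 \<le> \<bar>x\<bar> * \<bar>x\<bar>" by (intro mult_left_mono) auto
    thus ?thesis by (simp add: power2_eq_square)
  qed
  have "\<bar>sig*x\<bar> \<le> \<bar>sig\<bar> * (1 + x^2)" unfolding abs_mult using ax by (intro mult_left_mono) auto
  have wb: "w \<le> 5/4 + \<bar>sig\<bar> * (1 + x^2) + sig^2 * x^2"
  proof -
    have "sig*x \<le> \<bar>sig*x\<bar>" by simp
    moreover have "0 \<le> sig^2*x^2" by simp
    ultimately show ?thesis using \<open>\<bar>sig*x\<bar> \<le> \<bar>sig\<bar> * (1 + x^2)\<close> q unfolding w_def by linarith
  qed
  have "\<bar>ln w - m\<bar> \<le> 3 + w + \<bar>m\<bar>" using up lo w by linarith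
  also have "\<dots> \<le> (5 + \<bar>m\<bar> + \<bar>sig\<bar> + sig^2) * (1 + x^2)"
  proof -
    have "0 \<le> \<bar>m\<bar> * x^2" "0 \<le> sig^2" "0 \<le> x^2" by auto
    moreover have "(5 + \<bar>m\<bar> + \<bar>sig\<bar> + sig^2) * (1 + x^2) = 5 + 5*x^2 + \<bar>m\<bar> + \<bar>m\<bar>*x^2 + \<bar>sig\<bar>*(1+x^2) + sig^2 + sig^2*x^2"
      by (simp add: algebra_simps)
    ultimately show ?thesis using wb by linarith
  qed
  finally show ?thesis unfolding w_def .
qed

lemma g4_integrable:
  fixes q sig m s :: real
  assumes q: "3/4 \<le> q" "q \<le> 5/4" and s: "0 < s"
  shows "integrable (NN s) (\<lambda>x. (ln (q + sig*x + sig^2/2*x^2) - m)^4)"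
proof -
  interpret N: prob_space "NN s" using NN_prob[OF s] .
  define \<alpha> where "\<alpha> = 5 + \<bar>m\<bar> + \<bar>sig\<bar> + sig^2"
  show ?thesis
  proof (rule Bochner_Integration.integrable_bound)
  show "integrable (NN s) (\<lambda>x. \<alpha>^4 * (8 * (1 + x^8)))"
    by (intro integrable_mult_right Bochner_Integration.integrable_add N.integrable_const NN_int_pow[OF s])
  show "(\<lambda>x. (ln (q + sig*x + sig^2/2*x^2) - m)^4) \<in> borel_measurable (NN s)"
    by (simp add: NN_def)
  show "AE x in NN s. norm ((ln (q + sig*x + sig^2/2*x^2) - m)^4) \<le> norm (\<alpha>^4 * (8 * (1 + x^8)))"
  proof (intro AE_I2)
    fix x
    have b: "\<bar>ln (q + sig*x + sig^2/2*x^2) - m\<bar> \<le> \<alpha> * (1 + x^2)" using g_growth[OF q] unfolding \<alpha>_def .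
    have "(ln (q + sig*x + sig^2/2*x^2) - m)^4 = \<bar>ln (q + sig*x + sig^2/2*x^2) - m\<bar>^4" by (simp add: power_even_abs) 
    also have "\<dots> \<le> (\<alpha> * (1 + x^2))^4" using b by (intro power_mono) auto
    also have "\<dots> = \<alpha>^4 * (1+x^2)^4" by (simp add: power_mult_distrib)
    also have "\<dots> \<le> \<alpha>^4 * (8 * (1 + (x^2)^4))" using pow4_le[of "x^2"] by (intro mult_left_mono) auto
    also have "(x^2)^4 = x^8" by (simp flip: power_mult)
    finally have "(ln (q + sig*x + sig^2/2*x^2) - m)^4 \<le> \<alpha>^4 * (8 * (1 + x^8))" .
    moreover have "0 \<le> (ln (q + sig*x + sig^2/2*x^2) - m)^4" by (simp add: zero_le_even_power')
    ultimately show "norm ((ln (q + sig*x + sig^2/2*x^2) - m)^4) \<le> norm (\<alpha>^4 * (8 * (1 + x^8)))"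
      by simp
  qed
  qed
qed

lemma integral_add5:
  fixes f1 f2 f3 f4 f5 :: "'a \<Rightarrow> real"
  assumes "integrable M f1" "integrable M f2" "integrable M f3" "integrable M f4" "integrable M f5"
  shows "integrable M (\<lambda>x. f1 x + f2 x + f3 x + f4 x + f5 x)"
    and "integral\<^sup>L M (\<lambda>x. f1 x + f2 x + f3 x + f4 x + f5 x) =
      integral\<^sup>L M f1 + integral\<^sup>L M f2 + integral\<^sup>L M f3 + integral\<^sup>L M f4 + integral\<^sup>L M f5"
  using assms by (simp_all add: Bochner_Integration.integral_add)

lemma pow4_expand: "((a::real)+b)^4 = a^4 + 4*(b^1*a^3) + 6*(b^2*a^2) + 4*(b^3*a^1) + b^4"
  by algebra

lemma pow2_expand: "((a::real)+b)^2 = a^2 + 2*(b^1*a^1) + b^2"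
  by algebra

lemma (in prob_space) int_pow_le4:
  fixes X :: "'a \<Rightarrow> real"
  assumes rv: "random_variable borel X" and i4: "integrable M (\<lambda>\<omega>. X \<omega> ^ 4)" and j: "j \<le> 4"
  shows "integrable M (\<lambda>\<omega>. X \<omega> ^ j)"
proof (rule Bochner_Integration.integrable_bound)
  show "integrable M (\<lambda>\<omega>. 1 + X \<omega> ^ 4)" using i4 by simp
  show "(\<lambda>\<omega>. X \<omega> ^ j) \<in> borel_measurable M" using rv by measurable
  show "AE \<omega> in M. norm (X \<omega> ^ j) \<le> norm (1 + X \<omega> ^ 4)"
  proof (intro AE_I2)
    fix \<omega>
    have "\<bar>X \<omega>\<bar> ^ j \<le> 1 + X \<omega> ^ 4"
    proof (cases "\<bar>X \<omega>\<bar> \<le> 1")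
      case True
      hence "\<bar>X \<omega>\<bar> ^ j \<le> 1" by (simp add: power_le_one)
      moreover have "0 \<le> X \<omega> ^ 4" by (simp add: zero_le_even_power')
      ultimately show ?thesis by linarith
    next
      case False
      hence "\<bar>X \<omega>\<bar> ^ j \<le> \<bar>X \<omega>\<bar> ^ 4" using j by (intro power_increasing) auto
      also have "\<dots> = X \<omega> ^ 4" by (simp add: power_even_abs)
      finally show ?thesis by simp
    qed
    moreover have "0 \<le> X \<omega> ^ 4" by (simp add: zero_le_even_power')
    ultimately show "norm (X \<omega> ^ j) \<le> norm (1 + X \<omega> ^ 4)" by (simp add: power_abs)
  qed
qed

lemma (in prob_space) fourth_moment:
  fixes Z :: "nat \<Rightarrow> 'a \<Rightarrow> real"
  assumes rv: "\<And>k. random_variable borel (Z k)"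
    and i4: "\<And>k. integrable M (\<lambda>\<omega>. Z k \<omega> ^ 4)"
    and e1: "\<And>k. expectation (Z k) = 0"
    and e2: "\<And>k. expectation (\<lambda>\<omega>. Z k \<omega> ^ 2) = s2"
    and e4: "\<And>k. expectation (\<lambda>\<omega>. Z k \<omega> ^ 4) = s4"
    and ind: "\<And>n. indep_vars (\<lambda>_. borel) Z {..<n}"
  shows "integrable M (\<lambda>\<omega>. (\<Sum>k<n. Z k \<omega>)^4) \<and> expectation (\<lambda>\<omega>. (\<Sum>k<n. Z k \<omega>)) = 0
    \<and> expectation (\<lambda>\<omega>. (\<Sum>k<n. Z k \<omega>)^2) = real n * s2
    \<and> expectation (\<lambda>\<omega>. (\<Sum>k<n. Z k \<omega>)^4) \<le> real n * s4 + 3 * (real n)^2 * s2^2"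
proof (induction n)
  case 0
  then show ?case by simp
next
  case (Suc n)
  define S where "S = (\<lambda>\<omega>. \<Sum>k<n. Z k \<omega>)"
  define Y where "Y = Z n"
  have sumS: "(\<Sum>k<Suc n. Z k \<omega>) = S \<omega> + Y \<omega>" for \<omega> by (simp add: S_def Y_def)
  have rvS: "random_variable borel S" unfolding S_def using rv by measurable
  have rvY: "random_variable borel Y" unfolding Y_def using rv by simp
  have IH: "integrable M (\<lambda>\<omega>. S \<omega>^4)" "expectation S = 0" "expectation (\<lambda>\<omega>. S \<omega>^2) = real n * s2"
    "expectation (\<lambda>\<omega>. S \<omega>^4) \<le> real n * s4 + 3 * (real n)^2 * s2^2"
    using Suc.IH unfolding S_def by auto
  have iS: "integrable M (\<lambda>\<omega>. S \<omega>^i)" if "i \<le> 4" for i using int_pow_le4[OF rvS IH(1) that] .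
  have iY: "integrable M (\<lambda>\<omega>. Y \<omega>^i)" if "i \<le> 4" for i using int_pow_le4[OF rvY i4[of n, folded Y_def] that] .
  have indYS: "indep_var borel Y borel S"
  proof -
    have "indep_vars (\<lambda>_. borel) Z (insert n {..<n})" using ind[of "Suc n"] by (simp add: lessThan_Suc)
    from indep_vars_sum[OF _ _ this] show ?thesis unfolding S_def Y_def by simp
  qed
  have prod: "integrable M (\<lambda>\<omega>. Y \<omega>^j * S \<omega>^i) \<and>
      expectation (\<lambda>\<omega>. Y \<omega>^j * S \<omega>^i) = expectation (\<lambda>\<omega>. Y \<omega>^j) * expectation (\<lambda>\<omega>. S \<omega>^i)"
    if "i \<le> 4" "j \<le> 4" for i j
  proof -
    have "indep_var borel ((\<lambda>x. x^j) \<circ> Y) borel ((\<lambda>x. x^i) \<circ> S)"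
      by (rule indep_var_compose[OF indYS]) auto
    hence ind': "indep_var borel (\<lambda>\<omega>. Y \<omega>^j) borel (\<lambda>\<omega>. S \<omega>^i)" by (simp add: comp_def)
    show ?thesis using indep_var_lebesgue_integral[OF ind' iY[OF that(2)] iS[OF that(1)]]
        indep_var_integrable[OF ind' iY[OF that(2)] iS[OF that(1)]] by simp
  qed
  have EY: "expectation Y = 0" "expectation (\<lambda>\<omega>. Y \<omega>^2) = s2" "expectation (\<lambda>\<omega>. Y \<omega>^4) = s4"
    using e1[of n] e2[of n] e4[of n] unfolding Y_def by auto
  have EY1: "expectation (\<lambda>\<omega>. Y \<omega>^1) = 0" using EY by simp
  have ES1: "expectation (\<lambda>\<omega>. S \<omega>^1) = 0" using IH by simp
  have p4: "(\<lambda>\<omega>. (S \<omega> + Y \<omega>)^4) = (\<lambda>\<omega>. S \<omega>^4 + 4*(Y \<omega>^1*S \<omega>^3) + 6*(Y \<omega>^2*S \<omega>^2) + 4*(Y \<omega>^3*S \<omega>^1) + Y \<omega>^4)"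
    by (rule ext) (rule pow4_expand)
  have p2: "(\<lambda>\<omega>. (S \<omega> + Y \<omega>)^2) = (\<lambda>\<omega>. S \<omega>^2 + 2*(Y \<omega>^1*S \<omega>^1) + Y \<omega>^2)"
    by (rule ext) (rule pow2_expand)
  have I4: "integrable M (\<lambda>\<omega>. (S \<omega> + Y \<omega>)^4)" and E4: "expectation (\<lambda>\<omega>. (S \<omega> + Y \<omega>)^4) =
      expectation (\<lambda>\<omega>. S \<omega>^4) + 4*(expectation (\<lambda>\<omega>. Y \<omega>^1) * expectation (\<lambda>\<omega>. S \<omega>^3))
      + 6*(expectation (\<lambda>\<omega>. Y \<omega>^2) * expectation (\<lambda>\<omega>. S \<omega>^2))
      + 4*(expectation (\<lambda>\<omega>. Y \<omega>^3) * expectation (\<lambda>\<omega>. S \<omega>^1)) + expectation (\<lambda>\<omega>. Y \<omega>^4)"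
    unfolding p4 using integral_add5[of M "\<lambda>\<omega>. S \<omega>^4" "\<lambda>\<omega>. 4*(Y \<omega>^1*S \<omega>^3)" "\<lambda>\<omega>. 6*(Y \<omega>^2*S \<omega>^2)"
        "\<lambda>\<omega>. 4*(Y \<omega>^3*S \<omega>^1)" "\<lambda>\<omega>. Y \<omega>^4"]
      iS[of 4] iY[of 4] prod[of 3 1] prod[of 2 2] prod[of 1 3] by auto
  have I2: "expectation (\<lambda>\<omega>. (S \<omega> + Y \<omega>)^2) = expectation (\<lambda>\<omega>. S \<omega>^2) + 2*(expectation (\<lambda>\<omega>. Y \<omega>^1) * expectation (\<lambda>\<omega>. S \<omega>^1)) + expectation (\<lambda>\<omega>. Y \<omega>^2)"
    unfolding p2 using iS[of 2] iY[of 2] prod[of 1 1]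
    by (simp add: Bochner_Integration.integral_add)
  have I1: "expectation (\<lambda>\<omega>. S \<omega> + Y \<omega>) = 0"
    using iS[of 1] iY[of 1] IH(2) EY(1) by (simp add: Bochner_Integration.integral_add)
  have "expectation (\<lambda>\<omega>. (S \<omega> + Y \<omega>)^4) \<le> real (Suc n) * s4 + 3 * (real (Suc n))^2 * s2^2"
  proof -
    have "expectation (\<lambda>\<omega>. (S \<omega> + Y \<omega>)^4) = expectation (\<lambda>\<omega>. S \<omega>^4) + 6*(s2 * (real n * s2)) + s4"
      unfolding E4 EY1 ES1 EY(2) EY(3) IH(3) by simp
    also have "\<dots> \<le> real n * s4 + 3 * (real n)^2 * s2^2 + 6*(s2 * (real n * s2)) + s4" using IH(4) by simp
    also have "\<dots> \<le> real (Suc n) * s4 + 3 * (real (Suc n))^2 * s2^2"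
    proof -
      have "0 \<le> 3 * s2^2" by simp
      thus ?thesis by (simp add: algebra_simps power2_eq_square)
    qed
    finally show ?thesis .
  qed
  moreover have "expectation (\<lambda>\<omega>. (S \<omega> + Y \<omega>)^2) = real (Suc n) * s2"
    using I2 EY1 ES1 IH(3) EY(2) by (simp add: algebra_simps)
  ultimately show ?case unfolding sumS using I4 I1 by blast
qed

lemma (in prob_space) as_bound:
  fixes Z :: "nat \<Rightarrow> 'a \<Rightarrow> real"
  assumes rv: "\<And>k. random_variable borel (Z k)"
    and i4: "\<And>k. integrable M (\<lambda>\<omega>. Z k \<omega> ^ 4)"
    and e1: "\<And>k. expectation (Z k) = 0"
    and e2: "\<And>k. expectation (\<lambda>\<omega>. Z k \<omega> ^ 2) = s2"
    and e4: "\<And>k. expectation (\<lambda>\<omega>. Z k \<omega> ^ 4) = s4"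
    and ind: "\<And>n. indep_vars (\<lambda>_. borel) Z {..<n}"
    and eps: "0 < \<epsilon>"
  shows "AE \<omega> in M. eventually (\<lambda>n. \<bar>\<Sum>k<n. Z k \<omega>\<bar> \<le> real n * \<epsilon>) sequentially"
proof -
  define S where "S = (\<lambda>n \<omega>. \<Sum>k<n. Z k \<omega>)"
  note FM = fourth_moment[OF rv i4 e1 e2 e4 ind]
  have rvS[measurable]: "S n \<in> borel_measurable M" for n unfolding S_def using rv by measurable
  define A where "A = (\<lambda>n. {\<omega>\<in>space M. (real n * \<epsilon>)^4 < (S n \<omega>)^4})"
  have As[measurable]: "A n \<in> sets M" for n unfolding A_def by measurable
  have "0 \<le> expectation (\<lambda>\<omega>. Z 0 \<omega> ^ 4)" by (intro integral_nonneg_AE AE_I2) simp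
  hence s4: "0 \<le> s4" using e4[of 0] by simp
  define C where "C = (s4 + 3* s2^2) / \<epsilon>^4"
  have bnd: "measure M (A n) \<le> C * inverse (real n ^ 2)" if n: "1 \<le> n" for n
  proof -
    have cpos: "0 < (real n * \<epsilon>)^4" using n eps by simp
    have "A n \<subseteq> {\<omega>\<in>space M. (real n * \<epsilon>)^4 \<le> (S n \<omega>)^4}" unfolding A_def by auto
    hence "measure M (A n) \<le> measure M {\<omega>\<in>space M. (real n * \<epsilon>)^4 \<le> (S n \<omega>)^4}"
      by (intro finite_measure_mono) auto
    also have "\<dots> \<le> expectation (\<lambda>\<omega>. (S n \<omega>)^4) / (real n * \<epsilon>)^4"
      using FM[of n] cpos unfolding S_def
      by (intro integral_Markov_inequality_measure[where A="space M"]) (auto simp: zero_le_even_power')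
    also have "\<dots> \<le> (real n * s4 + 3 * (real n)^2 * s2^2) / (real n * \<epsilon>)^4"
      using FM[of n] cpos unfolding S_def by (intro divide_right_mono) auto
    also have "\<dots> \<le> ((real n)^2 * (s4 + 3 * s2^2)) / (real n * \<epsilon>)^4"
    proof -
      have "real n * s4 \<le> (real n)^2 * s4" using n s4 by (intro mult_right_mono) (auto simp: power2_eq_square)
      thus ?thesis using cpos by (intro divide_right_mono) (auto simp: algebra_simps)
    qed
    also have "\<dots> = C * inverse (real n ^ 2)" unfolding C_def using n eps
      by (simp add: field_simps power_mult_distrib power2_eq_square power4_eq_xxxx)
    finally show ?thesis .
  qed
  have summ: "summable (\<lambda>n. measure M (A n))"
  proof (rule summable_comparison_test')
    show "summable (\<lambda>n. C * inverse (real n ^ 2))"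
      by (intro summable_mult inverse_power_summable) simp
    show "norm (measure M (A n)) \<le> C * inverse (real n ^ 2)" if "1 \<le> n" for n
      using bnd[OF that] by simp
  qed
  have "AE \<omega> in M. eventually (\<lambda>n. \<omega> \<in> space M - A n) sequentially"
  proof (rule borel_cantelli_AE1[OF As _ summ])
    fix n show "emeasure M (A n) < \<infinity>" by (simp add: less_top[symmetric])
  qed
  then show ?thesis
  proof (rule AE_mp, intro AE_I2 impI)
    fix \<omega> assume "\<omega> \<in> space M" and ev: "eventually (\<lambda>n. \<omega> \<in> space M - A n) sequentially"
    show "eventually (\<lambda>n. \<bar>\<Sum>k<n. Z k \<omega>\<bar> \<le> real n * \<epsilon>) sequentially"
      using ev
    proof (rule eventually_mono)
      fix n assume "\<omega> \<in> space M - A n"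
      hence "(S n \<omega>)^4 \<le> (real n * \<epsilon>)^4" unfolding A_def using \<open>\<omega> \<in> space M\<close> by auto
      hence "\<bar>S n \<omega>\<bar>^4 \<le> (real n * \<epsilon>)^4" by (simp add: power_even_abs)
      moreover have "0 \<le> real n * \<epsilon>" using eps by simp
      ultimately have "\<bar>S n \<omega>\<bar> \<le> real n * \<epsilon>" using power_mono_iff[of "\<bar>S n \<omega>\<bar>" "real n * \<epsilon>" 4] by simp
      thus "\<bar>\<Sum>k<n. Z k \<omega>\<bar> \<le> real n * \<epsilon>" unfolding S_def .
    qed
  qed
qed

lemma limsup_bounds:
  fixes x :: "nat \<Rightarrow> real"
  assumes ev: "eventually (\<lambda>n. lo \<le> x n \<and> x n \<le> hi) sequentially"
  shows "ereal lo \<le> limsup (\<lambda>n. ereal (x n))" and "limsup (\<lambda>n. ereal (x n)) \<le> ereal hi"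
proof -
  show "ereal lo \<le> limsup (\<lambda>n. ereal (x n))"
    by (rule le_Limsup) (auto intro: eventually_mono[OF ev])
  show "limsup (\<lambda>n. ereal (x n)) \<le> ereal hi"
    by (rule Limsup_bounded) (auto intro: eventually_mono[OF ev])
qed

lemma rho_log:
  fixes lam eps sig x0 y0 dt :: real and B :: "real \<Rightarrow> 'a \<Rightarrow> real"
  assumes r0: "(x0, y0) \<noteq> (0, 0)"
    and pos: "\<And>k. 0 < 1 + (lam + eps\<^sup>2 / 2 - sig\<^sup>2 / 2) * dt + sig * bm_incr B dt k \<omega> + sig\<^sup>2 / 2 * (bm_incr B dt k \<omega>)\<^sup>2"
  shows "0 < milstein_rho lam eps sig x0 y0 B dt n \<omega> \<and>
    ln (milstein_rho lam eps sig x0 y0 B dt n \<omega>) = ln (sqrt (x0\<^sup>2 + y0\<^sup>2)) +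
      (\<Sum>k<n. ln (1 + (lam + eps\<^sup>2 / 2 - sig\<^sup>2 / 2) * dt + sig * bm_incr B dt k \<omega> + sig\<^sup>2 / 2 * (bm_incr B dt k \<omega>)\<^sup>2))"
proof (induction n)
  case 0
  have "0 < x0\<^sup>2 + y0\<^sup>2" using r0 by (auto simp: sum_power2_gt_zero_iff)
  then show ?case by simp
next
  case (Suc n)
  then show ?case using pos[of n] by (simp add: ln_mult)
qed

theorem proposition2p4:
  fixes M :: "'a measure" and B :: "real \<Rightarrow> 'a \<Rightarrow> real"
    and lam eps sig x0 y0 :: real
  assumes "standard_brownian_motion M B"
    and "(x0, y0) \<noteq> (0, 0)"
  shows "\<exists>dt0 > 0. \<exists>Cm Cp. 0 < Cm \<and> Cm < Cp \<and>
    (\<forall>dt. 0 < dt \<and> dt < 1 \<and> dt < dt0 \<longrightarrow>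
      (AE \<omega> in M.
         limsup (\<lambda>n. ereal (ln \<bar>milstein_rho lam eps sig x0 y0 B dt n \<omega>\<bar> / (real n * dt)))
           \<ge> ereal (ln (1 + (lam + eps\<^sup>2 / 2 - sig\<^sup>2 / 2) * dt) / dt - Cm * sqrt dt)
       \<and> limsup (\<lambda>n. ereal (ln \<bar>milstein_rho lam eps sig x0 y0 B dt n \<omega>\<bar> / (real n * dt)))
           \<le> ereal (ln (1 + (lam + eps\<^sup>2 / 2 - sig\<^sup>2 / 2) * dt) / dt + Cp * sqrt dt)))"
proof -
  define a where "a = lam + eps\<^sup>2 / 2 - sig\<^sup>2 / 2"
  define K where "K = sig^2*\<bar>a\<bar> + sig^4 + 20*\<bar>sig\<bar>^3 + 20* sig^6"
  have K0: "0 \<le> K" unfolding K_def by (simp add: zero_le_even_power')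
  define dt0 where "dt0 = 1 / (4 * (\<bar>a\<bar> + 1))"
  have BM: "prob_space M" "\<And>t. B t \<in> borel_measurable M"
    "\<And>s t. 0 \<le> s \<Longrightarrow> s < t \<Longrightarrow> distributed M lborel (\<lambda>\<omega>. B t \<omega> - B s \<omega>) (normal_density 0 (sqrt (t - s)))"
    "\<And>ts n. 0 \<le> ts 0 \<Longrightarrow> strict_mono ts \<Longrightarrow>
        prob_space.indep_vars M (\<lambda>_. borel) (\<lambda>i \<omega>. B (ts (Suc i)) \<omega> - B (ts i) \<omega>) {..<n}"
    using assms(1) unfolding standard_brownian_motion_def by auto
  interpret P: prob_space M by (rule BM(1))
  have main: "AE \<omega> in M.
         limsup (\<lambda>n. ereal (ln \<bar>milstein_rho lam eps sig x0 y0 B dt n \<omega>\<bar> / (real n * dt)))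
           \<ge> ereal (ln (1 + a * dt) / dt - (K+1) * sqrt dt)
       \<and> limsup (\<lambda>n. ereal (ln \<bar>milstein_rho lam eps sig x0 y0 B dt n \<omega>\<bar> / (real n * dt)))
           \<le> ereal (ln (1 + a * dt) / dt + (K+2) * sqrt dt)"
    if dt: "0 < dt" "dt < 1" "dt < dt0" for dt
  proof -
    have ad: "\<bar>a\<bar> * dt \<le> 1/4"
    proof -
      have "\<bar>a\<bar> * dt \<le> \<bar>a\<bar> * dt0" using dt by (intro mult_left_mono) auto
      also have "\<dots> \<le> 1/4" unfolding dt0_def by (simp add: field_simps)
      finally show ?thesis .
    qed
    define q where "q = 1 + a * dt"
    have adt: "\<bar>a*dt\<bar> \<le> 1/4" using ad dt by (simp add: abs_mult)
    have q: "3/4 \<le> q" "q \<le> 5/4" using adt unfolding q_def abs_le_iff by linarith+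
    define s where "s = sqrt dt"
    have s: "0 < s" using dt by (simp add: s_def)
    define X where "X = (\<lambda>k. bm_incr B dt k)"
    have distX: "distributed M lborel (X k) (normal_density 0 s)" for k
    proof -
      have "distributed M lborel (\<lambda>\<omega>. B (real (Suc k) * dt) \<omega> - B (real k * dt) \<omega>)
          (normal_density 0 (sqrt (real (Suc k) * dt - real k * dt)))"
        using dt by (intro BM(3)) (auto simp: distrib_right)
      moreover have "real (Suc k) * dt - real k * dt = dt" by (simp add: distrib_right)
      ultimately show ?thesis unfolding X_def bm_incr_def s_def by (simp add: fun_eq_iff)
    qed
    have Xm[measurable]: "X k \<in> borel_measurable M" for k
      unfolding X_def bm_incr_def using BM(2) by measurable
    have distrX: "distr M lborel (X k) = NN s" for k
      using distributed_distr_eq_density[OF distX] unfolding NN_def .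
    have EX: "P.expectation (\<lambda>\<omega>. h (X k \<omega>)) = integral\<^sup>L (NN s) h" if [measurable]: "h \<in> borel_measurable borel" for h :: "real \<Rightarrow> real" and k
    proof -
      have "integral\<^sup>L (distr M lborel (X k)) h = P.expectation (\<lambda>\<omega>. h (X k \<omega>))" using Bochner_Integration.integral_distr[of "X k" M lborel h] by simp
      thus ?thesis by (simp add: distrX)
    qed
    have IX: "integrable M (\<lambda>\<omega>. h (X k \<omega>)) \<longleftrightarrow> integrable (NN s) h" if [measurable]: "h \<in> borel_measurable borel" for h :: "real \<Rightarrow> real" and k
    proof -
      have "integrable (distr M lborel (X k)) h \<longleftrightarrow> integrable M (\<lambda>\<omega>. h (X k \<omega>))" using Bochner_Integration.integrable_distr_eq[of "X k" M lborel h] by simp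
      thus ?thesis by (simp add: distrX)
    qed
    define g where "g = (\<lambda>x. ln (q + sig*x + sig^2/2*x^2))"
    have gm[measurable]: "g \<in> borel_measurable borel" unfolding g_def by measurable
    define \<mu> where "\<mu> = integral\<^sup>L (NN s) g"
    have ig: "integrable (NN s) g" using mu_bound(1)[OF dt(1,2) ad, of sig] unfolding g_def q_def s_def .
    have mub: "\<bar>\<mu> - ln q\<bar> \<le> K * (dt * sqrt dt)"
      using mu_bound(2)[OF dt(1,2) ad, of sig] unfolding \<mu>_def g_def q_def s_def K_def .
    interpret N: prob_space "NN s" using NN_prob[OF s] .
    define Z where "Z = (\<lambda>k \<omega>. g (X k \<omega>) - \<mu>)"
    have rvZ: "P.random_variable borel (Z k)" for k unfolding Z_def by measurable
    have i4: "integrable M (\<lambda>\<omega>. Z k \<omega> ^ 4)" for k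
    proof -
      have hm: "(\<lambda>x. (g x - \<mu>)^4) \<in> borel_measurable borel" by measurable
      have "integrable (NN s) (\<lambda>x. (g x - \<mu>)^4)" using g4_integrable[OF q s, of sig \<mu>] unfolding g_def .
      thus ?thesis using IX[OF hm, of k] unfolding Z_def by simp
    qed
    have e1: "P.expectation (Z k) = 0" for k
    proof -
      have "P.expectation (Z k) = integral\<^sup>L (NN s) (\<lambda>x. g x - \<mu>)" unfolding Z_def by (rule EX) measurable
      also have "\<dots> = 0" using ig unfolding \<mu>_def by (simp add: N.prob_space[simplified])
      finally show ?thesis .
    qed
    have e2: "P.expectation (\<lambda>\<omega>. Z k \<omega> ^ 2) = integral\<^sup>L (NN s) (\<lambda>x. (g x - \<mu>)^2)" for k
      unfolding Z_def by (rule EX) measurable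
    have e4: "P.expectation (\<lambda>\<omega>. Z k \<omega> ^ 4) = integral\<^sup>L (NN s) (\<lambda>x. (g x - \<mu>)^4)" for k
      unfolding Z_def by (rule EX) measurable
    have ind: "P.indep_vars (\<lambda>_. borel) Z {..<n}" for n
    proof -
      have sm: "strict_mono (\<lambda>i. real i * dt)" using dt by (auto simp: strict_mono_def)
      have "P.indep_vars (\<lambda>_. borel) (\<lambda>i \<omega>. B (real (Suc i) * dt) \<omega> - B (real i * dt) \<omega>) {..<n}"
        using BM(4)[OF _ sm, of n] by simp
      hence "P.indep_vars (\<lambda>_. borel) (\<lambda>i \<omega>. (\<lambda>x. g x - \<mu>) (B (real (Suc i) * dt) \<omega> - B (real i * dt) \<omega>)) {..<n}"
        by (rule P.indep_vars_compose2) measurable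
      thus ?thesis unfolding Z_def X_def bm_incr_def by simp
    qed
    define \<epsilon> where "\<epsilon> = dt * sqrt dt / 2"
    have eps: "0 < \<epsilon>" using dt by (simp add: \<epsilon>_def)
    have AE1: "AE \<omega> in M. eventually (\<lambda>n. \<bar>\<Sum>k<n. Z k \<omega>\<bar> \<le> real n * \<epsilon>) sequentially"
      by (rule P.as_bound[OF rvZ i4 e1 e2 e4 ind eps])
    show ?thesis
    proof (rule AE_mp[OF AE1], intro AE_I2 impI)
      fix \<omega> assume ev: "eventually (\<lambda>n. \<bar>\<Sum>k<n. Z k \<omega>\<bar> \<le> real n * \<epsilon>) sequentially"
      define r0 where "r0 = ln (sqrt (x0\<^sup>2 + y0\<^sup>2))"
      define x where "x = (\<lambda>n. ln \<bar>milstein_rho lam eps sig x0 y0 B dt n \<omega>\<bar> / (real n * dt))"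
      have pos: "0 < 1 + (lam + eps\<^sup>2 / 2 - sig\<^sup>2 / 2) * dt + sig * bm_incr B dt k \<omega> + sig\<^sup>2 / 2 * (bm_incr B dt k \<omega>)\<^sup>2" for k
      proof -
        have e: "1 + (lam + eps\<^sup>2 / 2 - sig\<^sup>2 / 2) * dt + sig * bm_incr B dt k \<omega> + sig\<^sup>2 / 2 * (bm_incr B dt k \<omega>)\<^sup>2
          = q - 1/2 + (sig * bm_incr B dt k \<omega> + 1)^2/2"
          unfolding q_def a_def by (simp add: power2_eq_square field_simps)
        have "0 \<le> (sig * bm_incr B dt k \<omega> + 1)^2/2" by simp
        thus ?thesis unfolding e using q by linarith
      qed
      have xn: "x n = (r0 + real n * \<mu> + (\<Sum>k<n. Z k \<omega>)) / (real n * dt)" for n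
      proof -
        from rho_log[OF assms(2) pos, of n]
        have "0 < milstein_rho lam eps sig x0 y0 B dt n \<omega>"
          "ln (milstein_rho lam eps sig x0 y0 B dt n \<omega>) = r0 + (\<Sum>k<n. g (X k \<omega>))"
          unfolding r0_def g_def X_def q_def a_def by auto
        moreover have "(\<Sum>k<n. g (X k \<omega>)) = real n * \<mu> + (\<Sum>k<n. Z k \<omega>)"
          unfolding Z_def by (simp add: sum_subtractf)
        ultimately show ?thesis unfolding x_def by simp
      qed
      have ev2: "eventually (\<lambda>n. \<bar>r0\<bar> \<le> real n * \<epsilon>) sequentially"
      proof -
        obtain N :: nat where N: "\<bar>r0\<bar> / \<epsilon> \<le> real N" using real_arch_simple by blast
        show ?thesis unfolding eventually_sequentially
        proof (intro exI[of _ N] allI impI)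
          fix n assume "N \<le> n"
          hence "\<bar>r0\<bar> / \<epsilon> \<le> real n" using N by linarith
          thus "\<bar>r0\<bar> \<le> real n * \<epsilon>" using eps by (simp add: divide_le_eq)
        qed
      qed
      have mb: "\<bar>\<mu>/dt - ln q/dt\<bar> \<le> K * sqrt dt"
      proof -
        have "\<bar>\<mu>/dt - ln q/dt\<bar> = \<bar>\<mu> - ln q\<bar> / dt" using dt by (simp add: diff_divide_distrib[symmetric] abs_divide)
        also have "\<dots> \<le> K * (dt * sqrt dt) / dt" using mub dt by (intro divide_right_mono) auto
        also have "\<dots> = K * sqrt dt" using dt by simp
        finally show ?thesis .
      qed
      have evb: "eventually (\<lambda>n. ln q / dt - (K+1) * sqrt dt \<le> x n \<and> x n \<le> ln q / dt + (K+2) * sqrt dt) sequentially"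
        using ev ev2 eventually_ge_at_top[of "1::nat"]
      proof eventually_elim
        case (elim n)
        have nd: "0 < real n * dt" using elim(3) dt by simp
        have "x n - \<mu>/dt = (r0 + (\<Sum>k<n. Z k \<omega>)) / (real n * dt)"
        proof -
          have e: "real n * \<mu> / (real n * dt) = \<mu>/dt" using elim(3) by simp
          have "x n = (r0 + (\<Sum>k<n. Z k \<omega>)) / (real n * dt) + real n * \<mu> / (real n * dt)"
            unfolding xn by (simp add: add_divide_distrib)
          thus ?thesis using e by simp
        qed
        hence "\<bar>x n - \<mu>/dt\<bar> = \<bar>r0 + (\<Sum>k<n. Z k \<omega>)\<bar> / (real n * dt)" using nd by (simp add: abs_divide)
        also have "\<dots> \<le> (real n * dt * sqrt dt) / (real n * dt)"
        proof (rule divide_right_mono)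
          have "\<bar>r0 + (\<Sum>k<n. Z k \<omega>)\<bar> \<le> \<bar>r0\<bar> + \<bar>\<Sum>k<n. Z k \<omega>\<bar>" by (rule abs_triangle_ineq)
          also have "\<dots> \<le> 2 * (real n * \<epsilon>)" using elim(1,2) by linarith
          also have "\<dots> = real n * dt * sqrt dt" unfolding \<epsilon>_def by simp
          finally show "\<bar>r0 + (\<Sum>k<n. Z k \<omega>)\<bar> \<le> real n * dt * sqrt dt" .
        qed (use nd in simp)
        also have "\<dots> = sqrt dt" using nd elim(3) by simp
        finally have "\<bar>x n - \<mu>/dt\<bar> \<le> sqrt dt" .
        moreover have "0 \<le> K * sqrt dt" using K0 dt by simp
        ultimately show ?case using mb by (simp add: abs_le_iff algebra_simps)
      qed
      show "ereal (ln (1 + a * dt) / dt - (K+1) * sqrt dt) \<le> limsup (\<lambda>n. ereal (ln \<bar>milstein_rho lam eps sig x0 y0 B dt n \<omega>\<bar> / (real n * dt)))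
         \<and> limsup (\<lambda>n. ereal (ln \<bar>milstein_rho lam eps sig x0 y0 B dt n \<omega>\<bar> / (real n * dt))) \<le> ereal (ln (1 + a * dt) / dt + (K+2) * sqrt dt)"
        using limsup_bounds[OF evb] unfolding x_def q_def by simp
    qed
  qed
  show ?thesis
    apply (rule exI[where x=dt0], rule conjI)
     apply (simp add: dt0_def add_pos_nonneg)
    apply (rule exI[where x="K+1"], rule exI[where x="K+2"])
    apply (intro conjI allI impI)
    using K0 apply simp
     apply simp
    apply (rule main[unfolded a_def])
      apply auto
    done
qed

end
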